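(* Let $F\colon S^2\to S^2$ be a Thurston map of degree $d$, and let $\theta_0\in\mathbb{R}$. Suppose there is a continuous surjection $\tilde\gamma\colon S^1\to S^2$ such that $F\circ\tilde\gamma=\tilde\gamma\circ\tilde\varphi$ on $S^1$, where $\tilde\varphi(z)=e^{2\pi i\theta_0}z^d$. Then there is a continuous surjection $\gamma\colon S^1\to S^2$ with $F(\gamma(z))=\gamma(z^d)$ for all $z\in S^1$.
   Context: $S^1=\{z\in\mathbb{C}:|z|=1\}$. A Thurston map is an orientation-preserving postcritically finite branched covering of $S^2$ whose postcritical set has at least $3$ points; in particular its degree satisfies $d\ge2$. *)

theory Defs
  imports "HOL-Complex_Analysis.Complex_Analysis"
begin

definition S1 :: "complex set" where "S1 = sphere 0 1"
definition S2 :: "(complex \<times> real) set" where "S2 = sphere 0 1"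

text \<open>Inverse stereographic projections; they form an oriented (holomorphic) atlas,
  the transition map being z maps to 1/z.\<close>
definition invN :: "complex \<Rightarrow> complex \<times> real" where
  "invN z = (2 * z / complex_of_real (1 + (cmod z)^2), ((cmod z)^2 - 1) / (1 + (cmod z)^2))"
definition invS :: "complex \<Rightarrow> complex \<times> real" where
  "invS z = (2 * cnj z / complex_of_real (1 + (cmod z)^2), (1 - (cmod z)^2) / (1 + (cmod z)^2))"

definition orient_pres :: "(complex \<Rightarrow> complex) \<Rightarrow> complex set \<Rightarrow> bool" where
  "orient_pres h W \<longleftrightarrow> open W \<and> continuous_on W h \<and> inj_on h W \<and>
     (\<forall>z\<in>W. \<exists>e>0. cball z e \<subseteq> W \<and>
        (\<forall>r. 0 < r \<and> r < e \<longrightarrow> winding_number (h \<circ> circlepath z r) (h z) = 1))"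

definition oriented_chart :: "(complex \<times> real) set \<Rightarrow> (complex \<times> real \<Rightarrow> complex) \<Rightarrow> bool" where
  "oriented_chart U \<phi> \<longleftrightarrow> openin (top_of_set S2) U \<and> continuous_on U \<phi> \<and> inj_on \<phi> U \<and>
     open (\<phi> ` U) \<and> continuous_on (\<phi> ` U) (inv_into U \<phi>) \<and>
     orient_pres (\<phi> \<circ> invN) {z. invN z \<in> U} \<and> orient_pres (\<phi> \<circ> invS) {z. invS z \<in> U}"

definition has_local_degree :: "(complex \<times> real \<Rightarrow> complex \<times> real) \<Rightarrow> complex \<times> real \<Rightarrow> nat \<Rightarrow> bool" where
  "has_local_degree F p k \<longleftrightarrow> k \<ge> 1 \<and> (\<exists>U V \<phi> \<psi>. p \<in> U \<and> F p \<in> V \<and>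
     oriented_chart U \<phi> \<and> oriented_chart V \<psi> \<and> \<phi> p = 0 \<and> \<psi> (F p) = 0 \<and> F ` U = V \<and>
     (\<forall>x\<in>U. \<psi> (F x) = (\<phi> x) ^ k))"

definition local_degree :: "(complex \<times> real \<Rightarrow> complex \<times> real) \<Rightarrow> complex \<times> real \<Rightarrow> nat" where
  "local_degree F p = (THE k. has_local_degree F p k)"

definition branched_cover :: "(complex \<times> real \<Rightarrow> complex \<times> real) \<Rightarrow> bool" where
  "branched_cover F \<longleftrightarrow> F ` S2 = S2 \<and> (\<forall>p\<in>S2. \<exists>k. has_local_degree F p k)"

definition crit :: "(complex \<times> real \<Rightarrow> complex \<times> real) \<Rightarrow> (complex \<times> real) set" where
  "crit F = {p \<in> S2. local_degree F p \<ge> 2}"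

definition post :: "(complex \<times> real \<Rightarrow> complex \<times> real) \<Rightarrow> (complex \<times> real) set" where
  "post F = (\<Union>n\<in>{1..}. (F ^^ n) ` crit F)"

definition thurston_map :: "(complex \<times> real \<Rightarrow> complex \<times> real) \<Rightarrow> nat \<Rightarrow> bool" where
  "thurston_map F d \<longleftrightarrow> branched_cover F \<and>
     (\<forall>q\<in>S2. finite {p \<in> S2. F p = q} \<and> (\<Sum>p\<in>{p \<in> S2. F p = q}. local_degree F p) = d) \<and>
     finite (post F) \<and> card (post F) \<ge> 3"

end

theory Submission
  imports Defs
begin

theorem lemma4p1:
  fixes F :: "complex \<times> real \<Rightarrow> complex \<times> real" and d :: nat and \<theta>0 :: real
    and \<gamma>t :: "complex \<Rightarrow> complex \<times> real"
  assumes "thurston_map F d"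
    and "continuous_on S1 \<gamma>t" and "\<gamma>t ` S1 = S2"
    and "\<forall>z\<in>S1. F (\<gamma>t z) = \<gamma>t (exp (2 * pi * \<i> * complex_of_real \<theta>0) * z ^ d)"
  shows "\<exists>\<gamma>. continuous_on S1 \<gamma> \<and> \<gamma> ` S1 = S2 \<and> (\<forall>z\<in>S1. F (\<gamma> z) = \<gamma> (z ^ d))"
proof -
  have d2: "d \<ge> 2"
  proof (rule ccontr)
    assume "\<not> d \<ge> 2"
    hence dle: "d \<le> 1" by simp
    have tm: "branched_cover F" "\<forall>q\<in>S2. finite {p \<in> S2. F p = q} \<and> (\<Sum>p\<in>{p \<in> S2. F p = q}. local_degree F p) = d"
      "card (post F) \<ge> 3"
      using assms(1) unfolding thurston_map_def by auto
    have "crit F = {}"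
    proof (rule ccontr)
      assume "crit F \<noteq> {}"
      then obtain p where p: "p \<in> S2" "local_degree F p \<ge> 2" unfolding crit_def by auto
      have "F p \<in> S2" using tm(1) p(1) unfolding branched_cover_def by auto
      then have fin: "finite {x \<in> S2. F x = F p}" and s: "(\<Sum>x\<in>{x \<in> S2. F x = F p}. local_degree F x) = d"
        using tm(2) by auto
      have "local_degree F p \<le> (\<Sum>x\<in>{x \<in> S2. F x = F p}. local_degree F x)"
        by (rule member_le_sum) (use fin p in auto)
      with s p dle show False by simp
    qed
    hence "post F = {}" unfolding post_def by simp
    with tm(3) show False by simp
  qed
  define c where "c = exp (2 * pi * \<i> * complex_of_real \<theta>0)"
  define b where "b = exp (- (2 * pi * \<i> * complex_of_real \<theta>0) / of_nat (d - 1))"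
  have nb: "norm b = 1" unfolding b_def by (simp add: norm_exp)
  have e1: "b ^ (d - 1) = exp (of_nat (d - 1) * (- (2 * pi * \<i> * complex_of_real \<theta>0) / of_nat (d - 1)))"
    unfolding b_def by (rule exp_of_nat_mult[symmetric])
  have e2: "of_nat (d - 1) * (- (2 * pi * \<i> * complex_of_real \<theta>0) / of_nat (d - 1)) = - (2 * pi * \<i> * complex_of_real \<theta>0)"
  proof -
    have "(of_nat (d - 1) :: complex) \<noteq> 0" using d2 by simp
    thus ?thesis by (metis nonzero_mult_div_cancel_left times_divide_eq_right)
  qed
  have bd: "b ^ (d - 1) = exp (- (2 * pi * \<i> * complex_of_real \<theta>0))"
    using e1 e2 by (simp only:)
  have cb: "c * b ^ d = b"
  proof -
    have "b ^ d = b * b ^ (d - 1)" proof -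
      have "d = Suc (d - 1)" using d2 by simp
      hence "b ^ d = b ^ Suc (d - 1)" by (rule arg_cong)
      thus ?thesis by (simp only: power_Suc)
    qed
    hence "c * b ^ d = b * (c * exp (- (2 * pi * \<i> * complex_of_real \<theta>0)))" using bd by simp
    also have "c * exp (- (2 * pi * \<i> * complex_of_real \<theta>0)) = 1" unfolding c_def by (simp add: exp_minus)
    finally show ?thesis by simp
  qed
  have b0: "b \<noteq> 0" using nb by auto
  have img: "(\<lambda>z. b * z) ` S1 = S1"
  proof
    show "(\<lambda>z. b * z) ` S1 \<subseteq> S1" using nb by (auto simp: S1_def norm_mult)
    show "S1 \<subseteq> (\<lambda>z. b * z) ` S1"
    proof
      fix w assume w: "w \<in> S1"
      have "w / b \<in> S1" using w nb by (simp add: S1_def norm_divide)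
      moreover have "w = b * (w / b)" using b0 by simp
      ultimately show "w \<in> (\<lambda>z. b * z) ` S1" by blast
    qed
  qed
  define \<gamma> where "\<gamma> = (\<lambda>z. \<gamma>t (b * z))"
  have "continuous_on S1 \<gamma>"
    unfolding \<gamma>_def
    by (rule continuous_on_compose2[OF assms(2)]) (use img in \<open>auto intro!: continuous_intros\<close>)
  moreover have "\<gamma> ` S1 = S2" unfolding \<gamma>_def using img assms(3) by (metis image_image)
  moreover have "\<forall>z\<in>S1. F (\<gamma> z) = \<gamma> (z ^ d)"
  proof
    fix z assume z: "z \<in> S1"
    hence "b * z \<in> S1" using img by blast
    hence "F (\<gamma> z) = \<gamma>t (c * (b * z) ^ d)" using assms(4) unfolding \<gamma>_def c_def by blast
    also have "c * (b * z) ^ d = (c * b ^ d) * z ^ d" by (simp add: power_mult_distrib)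
    finally show "F (\<gamma> z) = \<gamma> (z ^ d)" using cb unfolding \<gamma>_def by simp
  qed
  ultimately show ?thesis by blast
qed

end
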